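(* For all integers $m \ge 1$ and $n \ge 1$, $$\mathrm{Var}[\xi_{m,n}] = (m-1)\cdot S_{m,n}.$$
   Context: Let $m\ge 1$, $n\ge 1$ be integers and let $\{\alpha_1,\dots,\alpha_m\}$ be an alphabet of $m$ symbols. A random string is generated as follows: starting from the empty string, repeatedly append a symbol chosen uniformly at random from the alphabet (independently of all previous choices), and stop at the first moment the string ends with $n$ consecutive copies of $\alpha_1$. The random variable $\xi_{m,n}$ is the length of the resulting string. Let $G_{m,n}=(V,E)$ be the complete $m$-ary rooted tree of height $n$ (the root is at level $0$, every node at level $<n$ has exactly $m$ children, and there are $m^d$ nodes at level $d$ for $0\le d\le n$; $V$ includes the root). For $v\in V$, $\pi(v)\subseteq E$ denotes the set of edges of the unique path from $v$ to the root. Define $S_{m,n} := \sum_{(a,b)\in V\times V} |\pi(a)\cap\pi(b)|$ (the sum over all ordered pairs of nodes, including pairs with $a=b$). *)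

theory Defs
  imports "HOL-Probability.Probability"
begin

text \<open>Symbols of the alphabet are 0,...,m-1; symbol 0 plays the role of alpha_1.
  The infinite i.i.d. uniform symbol sequence is a stream; the generated string is
  its prefix of length xi.\<close>

definition sym_space :: "nat \<Rightarrow> nat stream measure" where
  "sym_space m = stream_space (measure_pmf (pmf_of_set {..<m}))"

definition xi :: "nat \<Rightarrow> nat \<Rightarrow> nat stream \<Rightarrow> nat" where
  "xi m n \<omega> = (LEAST k. n \<le> k \<and> (\<forall>i\<in>{k - n..<k}. \<omega> !! i = 0))"

text \<open>Complete m-ary rooted tree of height n: nodes are words over {0..<m} of length at
  most n (the root is the empty word); the edges join a node v to its parent butlast v.\<close>
definition tree_nodes :: "nat \<Rightarrow> nat \<Rightarrow> nat list set" where
  "tree_nodes m n = {v. set v \<subseteq> {..<m} \<and> length v \<le> n}"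

definition tree_edges :: "nat \<Rightarrow> nat \<Rightarrow> (nat list \<times> nat list) set" where
  "tree_edges m n = {(butlast v, v) | v. v \<in> tree_nodes m n \<and> v \<noteq> []}"

definition path_edges :: "nat list \<Rightarrow> (nat list \<times> nat list) set" where
  "path_edges v = {(take k v, take (Suc k) v) | k. k < length v}"

definition S :: "nat \<Rightarrow> nat \<Rightarrow> nat" where
  "S m n = (\<Sum>(a, b) \<in> tree_nodes m n \<times> tree_nodes m n. card (path_edges a \<inter> path_edges b))"

end

theory Submission
  imports Defs
begin

definition stp :: "nat \<Rightarrow> nat \<Rightarrow> nat" where "stp j x = (if x = 0 then Suc j else 0)"

fun run :: "nat \<Rightarrow> nat stream \<Rightarrow> nat \<Rightarrow> nat" where
  "run j \<omega> 0 = j"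
| "run j \<omega> (Suc k) = run (stp j (shd \<omega>)) (stl \<omega>) k"

lemma run_Suc_fwd: "run j \<omega> (Suc k) = stp (run j \<omega> k) (\<omega> !! k)"
  by (induction k arbitrary: j \<omega>) auto

lemma run0_iff: "r \<le> run 0 \<omega> k \<longleftrightarrow> (r \<le> k \<and> (\<forall>i\<in>{k - r..<k}. \<omega> !! i = 0))"
proof (induction k arbitrary: r)
  case 0
  then show ?case by auto
next
  case (Suc k)
  show ?case
  proof (cases "\<omega> !! k = 0")
    case True
    show ?thesis
    proof (cases r)
      case 0 then show ?thesis by auto
    next
      case (Suc r')
      have "{Suc k - r..<Suc k} = insert k {k - r'..<k}" using Suc by auto
      have "run 0 \<omega> (Suc k) = Suc (run 0 \<omega> k)" by (simp only: run_Suc_fwd stp_def True) simp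
      then show ?thesis using Suc.IH[of r'] True Suc \<open>{Suc k - r..<Suc k} = _\<close> by auto
    qed
  next
    case False
    have "run 0 \<omega> (Suc k) = 0" by (simp only: run_Suc_fwd stp_def False) simp
    show ?thesis
    proof (cases r)
      case 0 then show ?thesis by simp
    next
      case (Suc r')
      have "k \<in> {Suc k - r..<Suc k}" using Suc by auto
      then show ?thesis using False Suc \<open>run 0 \<omega> (Suc k) = 0\<close> by auto
    qed
  qed
qed

lemma xi_run: "xi m n \<omega> = (LEAST k. n \<le> run 0 \<omega> k)"
  unfolding xi_def run0_iff ..

fun F :: "nat \<Rightarrow> nat \<Rightarrow> nat \<Rightarrow> nat stream \<Rightarrow> nat" where
  "F n 0 j \<omega> = 0"
| "F n (Suc N) j \<omega> = (if n \<le> j then 0 else Suc (F n N (stp j (shd \<omega>)) (stl \<omega>)))"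

lemma F_hit: "(\<forall>i<k. run j \<omega> i < n) \<Longrightarrow> n \<le> run j \<omega> k \<Longrightarrow> F n N j \<omega> = min N k"
proof (induction N arbitrary: j \<omega> k)
  case 0 then show ?case by simp
next
  case (Suc N)
  show ?case
  proof (cases k)
    case 0 then show ?thesis using Suc.prems by simp
  next
    case (Suc k')
    have "j < n" using Suc.prems(1) \<open>k = Suc k'\<close> by (metis run.simps(1) zero_less_Suc)
    have "F n N (stp j (shd \<omega>)) (stl \<omega>) = min N k'"
      using Suc.prems \<open>k = Suc k'\<close> by (intro Suc.IH) auto
    then show ?thesis using \<open>j < n\<close> \<open>k = Suc k'\<close> by simp
  qed
qed

lemma F_nohit: "(\<forall>i<N. run j \<omega> i < n) \<Longrightarrow> F n N j \<omega> = N"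
proof (induction N arbitrary: j \<omega>)
  case 0 then show ?case by simp
next
  case (Suc N)
  have "j < n" using Suc.prems by (metis run.simps(1) zero_less_Suc)
  have "F n N (stp j (shd \<omega>)) (stl \<omega>) = N"
    using Suc.prems by (intro Suc.IH) auto
  then show ?case using \<open>j < n\<close> by simp
qed

lemma F_ge: "n \<le> j \<Longrightarrow> F n N j \<omega> = 0"
  by (cases N) auto

lemma F_mono: "F n N j \<omega> \<le> F n (Suc N) j \<omega>"
proof (induction N arbitrary: j \<omega>)
  case 0 then show ?case by simp
next
  case (Suc N)
  then show ?case by (simp add: Suc.IH)
qed

abbreviation "MM m \<equiv> measure_pmf (pmf_of_set {..<(m::nat)})"

lemma sym_space_eq: "sym_space m = stream_space (MM m)"
  by (simp add: sym_space_def)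

lemma F_alt: "F n (Suc N) j = (\<lambda>\<omega>. if n \<le> j then 0 else Suc (if shd \<omega> = 0 then F n N (Suc j) (stl \<omega>) else F n N 0 (stl \<omega>)))"
  by (auto simp: stp_def fun_eq_iff)

lemma F_meas[measurable]: "F n N j \<in> measurable (stream_space (MM m)) (count_space UNIV)"
proof (induction N arbitrary: j)
  case 0 then show ?case by simp
next
  case (Suc N)
  note [measurable] = Suc.IH
  show ?case unfolding F_alt by measurable
qed

definition G :: "nat \<Rightarrow> nat \<Rightarrow> nat stream \<Rightarrow> ennreal" where
  "G n j \<omega> = (SUP N. of_nat (F n N j \<omega>))"

lemma G_meas[measurable]: "G n j \<in> borel_measurable (stream_space (MM m))"
  unfolding G_def by measurable

lemma G_ge: "n \<le> j \<Longrightarrow> G n j \<omega> = 0"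
  by (simp add: G_def F_ge)

lemma SUP_shift0: "f 0 = (0::ennreal) \<Longrightarrow> (SUP N. f N) = (SUP N. f (Suc N))"
  apply (rule antisym)
  apply (rule SUP_least)
  subgoal for N by (cases N) (auto intro: SUP_upper2)
  apply (rule SUP_least)
  apply (rule SUP_upper) apply simp
  done

lemma G_rec: "j < n \<Longrightarrow> G n j \<omega> = 1 + G n (stp j (shd \<omega>)) (stl \<omega>)"
proof -
  assume "j < n"
  have "G n j \<omega> = (SUP N. of_nat (F n (Suc N) j \<omega>))"
    unfolding G_def by (rule SUP_shift0) simp
  also have "\<dots> = (SUP N. 1 + of_nat (F n N (stp j (shd \<omega>)) (stl \<omega>)))"
    using \<open>j < n\<close> by (simp add: add.commute)
  also have "\<dots> = 1 + G n (stp j (shd \<omega>)) (stl \<omega>)"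
    unfolding G_def by (rule ennreal_SUP_add_right[symmetric]) simp
  finally show ?thesis .
qed

lemma incseq_F: "incseq (\<lambda>N. (of_nat (F n N j \<omega>) :: ennreal))"
  by (rule incseq_SucI) (metis F_mono of_nat_le_iff)

lemma G_xi:
  assumes "G n 0 \<omega> \<noteq> \<infinity>"
  shows "G n 0 \<omega> = of_nat (xi m n \<omega>)"
proof -
  have "\<exists>i. n \<le> run 0 \<omega> i"
  proof (rule ccontr)
    assume "\<not> ?thesis"
    then have "\<And>N. F n N 0 \<omega> = N" by (intro F_nohit) (auto simp: not_le)
    then have "G n 0 \<omega> = (SUP N. of_nat N)" by (simp add: G_def)
    also have "\<dots> = \<infinity>" using ennreal_SUP_of_nat_eq_top by simp
    finally show False using assms by simp
  qed
  then obtain k where k: "n \<le> run 0 \<omega> k" "\<forall>i<k. run 0 \<omega> i < n" "xi m n \<omega> = k"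
    unfolding xi_run by (metis (mono_tags, lifting) LeastI_ex not_less_Least not_le)
  then have "\<And>N. F n N 0 \<omega> = min N k" by (intro F_hit) auto
  then have "G n 0 \<omega> = (SUP N. of_nat (min N k))" by (simp add: G_def)
  also have "\<dots> = of_nat k"
    apply (rule antisym)
    apply (rule SUP_least) apply simp
    apply (rule SUP_upper2[of k]) apply auto
    done
  finally show ?thesis using k by simp
qed

lemma integ_step:
  assumes m1: "1 \<le> m" and meas[measurable]: "\<And>k. H k \<in> borel_measurable (stream_space (MM m))"
  shows "(\<integral>\<^sup>+\<omega>. H (stp j (shd \<omega>)) (stl \<omega>) \<partial>stream_space (MM m))
     = ((\<integral>\<^sup>+\<omega>. H (Suc j) \<omega> \<partial>stream_space (MM m)) + of_nat (m - 1) * (\<integral>\<^sup>+\<omega>. H 0 \<omega> \<partial>stream_space (MM m))) / of_nat m"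
proof -
  interpret P: prob_space "MM m" by (rule prob_space_measure_pmf)
  define I where "I k = (\<integral>\<^sup>+\<omega>. H k \<omega> \<partial>stream_space (MM m))" for k
  have eq: "(\<lambda>\<omega>. H (stp j (shd \<omega>)) (stl \<omega>)) = (\<lambda>\<omega>. if shd \<omega> = 0 then H (Suc j) (stl \<omega>) else H 0 (stl \<omega>))"
    by (auto simp: stp_def fun_eq_iff)
  have "(\<integral>\<^sup>+\<omega>. H (stp j (shd \<omega>)) (stl \<omega>) \<partial>stream_space (MM m)) = (\<integral>\<^sup>+x. I (stp j x) \<partial>MM m)"
    unfolding I_def by (subst prob_space.nn_integral_stream_space[OF prob_space_measure_pmf]) (simp_all add: eq)
  also have "\<dots> = (\<Sum>x\<in>{..<m}. I (stp j x)) / of_nat (card {..<m})"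
    using m1 by (intro nn_integral_pmf_of_set) (auto simp: lessThan_empty_iff)
  also have "(\<Sum>x\<in>{..<m}. I (stp j x)) = I (Suc j) + of_nat (m - 1) * I 0"
  proof -
    obtain m' where m': "m = Suc m'" using m1 by (cases m) auto
    show ?thesis unfolding m' sum.lessThan_Suc_shift by (simp add: stp_def)
  qed
  finally show ?thesis by (simp add: I_def)
qed

fun lcp :: "nat list \<Rightarrow> nat list \<Rightarrow> nat" where
  "lcp (x#xs) (y#ys) = (if x = y then Suc (lcp xs ys) else 0)"
| "lcp _ _ = 0"

lemma path_edges_Nil[simp]: "path_edges [] = {}"
  by (simp add: path_edges_def)

lemma path_edges_Cons: "path_edges (x#xs) = insert ([],[x]) ((\<lambda>(a,b). (x#a, x#b)) ` path_edges xs)"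
proof (rule set_eqI)
  fix e
  show "e \<in> path_edges (x#xs) \<longleftrightarrow> e \<in> insert ([],[x]) ((\<lambda>(a,b). (x#a, x#b)) ` path_edges xs)"
  proof
    assume "e \<in> path_edges (x#xs)"
    then obtain k where k: "k < Suc (length xs)" "e = (take k (x#xs), take (Suc k) (x#xs))"
      by (auto simp: path_edges_def)
    show "e \<in> insert ([],[x]) ((\<lambda>(a,b). (x#a, x#b)) ` path_edges xs)"
    proof (cases k)
      case 0 then show ?thesis using k by simp
    next
      case (Suc k')
      then have "(take k' xs, take (Suc k') xs) \<in> path_edges xs" using k by (auto simp: path_edges_def)
      then show ?thesis using k Suc by (auto intro!: image_eqI)
    qed
  next
    assume "e \<in> insert ([],[x]) ((\<lambda>(a,b). (x#a, x#b)) ` path_edges xs)"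
    then consider "e = ([],[x])" | k where "k < length xs" "e = (x # take k xs, x # take (Suc k) xs)"
      by (auto simp: path_edges_def)
    then show "e \<in> path_edges (x#xs)"
    proof cases
      case 1
      have "e = (take 0 (x#xs), take (Suc 0) (x#xs))" using 1 by simp
      then show ?thesis unfolding path_edges_def by blast
    next
      case 2
      have "e = (take (Suc k) (x#xs), take (Suc (Suc k)) (x#xs))" "Suc k < length (x#xs)" using 2 by simp_all
      then show ?thesis unfolding path_edges_def by blast
    qed
  qed
qed

lemma finite_path_edges: "finite (path_edges v)"
  unfolding path_edges_def by simp

lemma path_edges_hd: "e \<in> path_edges (x#xs) \<Longrightarrow> snd e \<noteq> [] \<and> hd (snd e) = x"
  by (auto simp: path_edges_def)

lemma card_inter: "card (path_edges a \<inter> path_edges b) = lcp a b"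
proof (induction a arbitrary: b)
  case Nil then show ?case by simp
next
  case (Cons x xs)
  show ?case
  proof (cases b)
    case Nil then show ?thesis by simp
  next
    case (Cons y ys)
    show ?thesis
    proof (cases "x = y")
      case True
      let ?h = "\<lambda>(a,b). (x#a, x#b)"
      have inj: "inj ?h" by (auto simp: inj_def)
      have "path_edges (x#xs) \<inter> path_edges b = insert ([],[x]) (?h ` (path_edges xs \<inter> path_edges ys))"
        unfolding Cons True path_edges_Cons by (auto simp: image_Int[OF inj])
      moreover have "([],[x]) \<notin> ?h ` (path_edges xs \<inter> path_edges ys)" by auto
      moreover have "card (?h ` (path_edges xs \<inter> path_edges ys)) = card (path_edges xs \<inter> path_edges ys)"
        by (rule card_image) (rule inj_on_subset[OF inj], simp)
      ultimately show ?thesis using Cons.IH[of ys] True Cons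
        by (simp add: finite_path_edges)
    next
      case False
      have "path_edges (x#xs) \<inter> path_edges b = {}"
        using path_edges_hd[of _ x xs] path_edges_hd[of _ y ys] False Cons by blast
      then show ?thesis using False Cons by simp
    qed
  qed
qed

lemma tree_nodes_0: "tree_nodes m 0 = {[]}"
  by (auto simp: tree_nodes_def)

lemma tree_nodes_Suc: "tree_nodes m (Suc n) = insert [] ((\<lambda>(c,v). c#v) ` ({..<m} \<times> tree_nodes m n))"
proof (rule set_eqI)
  fix v show "v \<in> tree_nodes m (Suc n) \<longleftrightarrow> v \<in> insert [] ((\<lambda>(c,v). c#v) ` ({..<m} \<times> tree_nodes m n))"
    by (cases v) (auto simp: tree_nodes_def image_iff)
qed

lemma finite_tree_nodes: "finite (tree_nodes m n)"
  by (induction n) (simp_all add: tree_nodes_0 tree_nodes_Suc)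

lemma inj_Cons2: "inj (\<lambda>(c::nat, v). c#v)"
  by (auto simp: inj_def)

lemma card_tree_nodes_Suc: "card (tree_nodes m (Suc n)) = Suc (m * card (tree_nodes m n))"
  unfolding tree_nodes_Suc
  by (subst card_insert_disjoint) (auto simp: finite_tree_nodes card_image inj_on_subset[OF inj_Cons2] card_cartesian_product)

lemma S_lcp: "S m n = (\<Sum>a\<in>tree_nodes m n. \<Sum>b\<in>tree_nodes m n. lcp a b)"
  unfolding S_def card_inter by (simp add: sum.cartesian_product)

lemma S_0: "S m 0 = 0"
  by (simp add: S_lcp tree_nodes_0)

lemma S_Suc: "S m (Suc n) = m * (card (tree_nodes m n) ^ 2 + S m n)"
proof -
  let ?T = "tree_nodes m n"
  let ?h = "\<lambda>(c::nat, v). c#v"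
  let ?X = "?h ` ({..<m} \<times> ?T)"
  have nin: "[] \<notin> ?X" by auto
  have fX: "finite ?X" by (simp add: finite_tree_nodes)
  have inj: "inj_on ?h ({..<m} \<times> ?T)" by (rule inj_on_subset[OF inj_Cons2]) simp
  have "S m (Suc n) = (\<Sum>a\<in>?X. \<Sum>b\<in>?X. lcp a b)"
    unfolding S_lcp tree_nodes_Suc
    apply (subst sum.insert[OF fX nin])
    apply (simp add: sum.insert[OF fX nin])
    done
  also have "\<dots> = (\<Sum>(c,v)\<in>{..<m} \<times> ?T. \<Sum>(c',w)\<in>{..<m} \<times> ?T. lcp (c#v) (c'#w))"
  proof -
    have r: "\<And>g. (\<Sum>a\<in>?X. g a) = (\<Sum>p\<in>{..<m}\<times>?T. g (?h p))" by (simp add: sum.reindex[OF inj])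
    show ?thesis unfolding r by (simp add: split_def)
  qed
  also have "\<dots> = (\<Sum>(c,v)\<in>{..<m} \<times> ?T. \<Sum>w\<in>?T. Suc (lcp v w))"
  proof (rule sum.cong[OF refl], clarify)
    fix c v assume c: "c < m"
    have "(\<Sum>(c',w)\<in>{..<m} \<times> ?T. lcp (c#v) (c'#w)) = (\<Sum>c'<m. \<Sum>w\<in>?T. if c = c' then Suc (lcp v w) else 0)"
      by (simp add: sum.cartesian_product[symmetric])
    also have "\<dots> = (\<Sum>c'<m. if c = c' then (\<Sum>w\<in>?T. Suc (lcp v w)) else 0)"
      by (rule sum.cong) auto
    also have "\<dots> = (\<Sum>w\<in>?T. Suc (lcp v w))"
      using c by simp
    finally show "(\<Sum>(c',w)\<in>{..<m} \<times> ?T. lcp (c#v) (c'#w)) = (\<Sum>w\<in>?T. Suc (lcp v w))" .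
  qed
  also have "\<dots> = (\<Sum>c<m. \<Sum>v\<in>?T. \<Sum>w\<in>?T. Suc (lcp v w))"
    by (simp add: sum.cartesian_product[symmetric])
  also have "\<dots> = m * (\<Sum>v\<in>?T. \<Sum>w\<in>?T. Suc (lcp v w))"
    by simp
  also have "(\<Sum>v\<in>?T. \<Sum>w\<in>?T. Suc (lcp v w)) = card ?T ^ 2 + S m n"
    by (simp only: S_lcp Suc_eq_plus1_left sum.distrib) (simp add: power2_eq_square)
  finally show ?thesis .
qed

definition xx :: "nat \<Rightarrow> nat \<Rightarrow> nat \<Rightarrow> real" where
  "xx m n j = (\<Sum>i=Suc j..n. real m ^ i)"

fun ww :: "nat \<Rightarrow> nat \<Rightarrow> nat \<Rightarrow> real" where
  "ww m n 0 = 0"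
| "ww m n (Suc j) = real m * ww m n j + real m - 2 * real m * xx m n j"

definition yy :: "nat \<Rightarrow> nat \<Rightarrow> nat \<Rightarrow> real" where
  "yy m n j = ww m n j - ww m n n"

lemma xx_closed: "j \<le> n \<Longrightarrow> (real m - 1) * xx m n j = real m ^ Suc n - real m ^ Suc j"
proof (induction n)
  case 0 then show ?case by (simp add: xx_def)
next
  case (Suc n)
  show ?case
  proof (cases "j = Suc n")
    case True then show ?thesis by (simp add: xx_def)
  next
    case False
    then have "j \<le> n" using Suc.prems by simp
    have "xx m (Suc n) j = xx m n j + real m ^ Suc n"
      unfolding xx_def using \<open>j \<le> n\<close> by (simp add: sum.cl_ivl_Suc)
    then show ?thesis using Suc.IH[OF \<open>j \<le> n\<close>] by (simp add: algebra_simps)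
  qed
qed

lemma xx_ge: "n \<le> j \<Longrightarrow> xx m n j = 0"
  by (simp add: xx_def)

lemma xx_nonneg: "0 \<le> xx m n j"
  unfolding xx_def by (intro sum_nonneg) simp

lemma xx_le0: "xx m n j \<le> xx m n 0"
  unfolding xx_def by (rule sum_mono2) auto

lemma xx_rec:
  assumes "j < n"
  shows "real m * xx m n j = real m + xx m n (Suc j) + (real m - 1) * xx m n 0"
proof -
  have "real m * xx m n j = (\<Sum>i=Suc j..n. real m ^ Suc i)"
    unfolding xx_def by (simp add: sum_distrib_left)
  also have "\<dots> = (\<Sum>i=Suc (Suc j)..Suc n. real m ^ i)"
    by (rule sum.shift_bounds_cl_Suc_ivl[symmetric])
  also have "\<dots> = xx m n (Suc j) + real m ^ Suc n"
    unfolding xx_def using assms by (simp add: sum.cl_ivl_Suc)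
  finally show ?thesis using xx_closed[of 0 n m] by simp
qed

lemma yy_n: "yy m n n = 0"
  by (simp add: yy_def)

lemma yy_rec: "real m * yy m n j = 2 * real m * xx m n j - real m + yy m n (Suc j) + (real m - 1) * yy m n 0"
  by (simp add: yy_def algebra_simps)

lemma ww_closed: "j \<le> n \<Longrightarrow> (real m - 1)^2 * ww m n j
   = (real m ^ Suc j - real m) * (real m - 1 - 2 * real m ^ Suc n) + 2 * real j * real m ^ Suc j * (real m - 1)"
proof (induction j)
  case 0 then show ?case by simp
next
  case (Suc j)
  then have h: "(real m - 1) * xx m n j = real m ^ Suc n - real m ^ Suc j" by (intro xx_closed) simp
  have IH: "(real m - 1)^2 * ww m n j
   = (real m ^ Suc j - real m) * (real m - 1 - 2 * real m ^ Suc n) + 2 * real j * real m ^ Suc j * (real m - 1)"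
    using Suc by simp
  have "(real m - 1)^2 * ww m n (Suc j) = real m * ((real m - 1)^2 * ww m n j) + real m * (real m - 1)^2
      - 2 * real m * (real m - 1) * ((real m - 1) * xx m n j)"
    by (simp add: algebra_simps power2_eq_square)
  also have "\<dots> = real m * ((real m ^ Suc j - real m) * (real m - 1 - 2 * real m ^ Suc n) + 2 * real j * real m ^ Suc j * (real m - 1)) + real m * (real m - 1)^2
      - 2 * real m * (real m - 1) * (real m ^ Suc n - real m ^ Suc j)"
    unfolding IH h ..
  also have "\<dots> = (real m ^ Suc (Suc j) - real m) * (real m - 1 - 2 * real m ^ Suc n) + 2 * real (Suc j) * real m ^ Suc (Suc j) * (real m - 1)"
    by (simp add: algebra_simps power2_eq_square)
  finally show ?case .
qed

fun NN :: "nat \<Rightarrow> nat \<Rightarrow> nat" where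
  "NN m 0 = 1" | "NN m (Suc n) = Suc (m * NN m n)"

fun SS :: "nat \<Rightarrow> nat \<Rightarrow> nat" where
  "SS m 0 = 0" | "SS m (Suc n) = m * (NN m n ^ 2 + SS m n)"

lemma NN_closed: "(real m - 1) * real (NN m n) = real m ^ Suc n - 1"
  by (induction n) (simp_all add: algebra_simps left_diff_distrib)

lemma pw: "(x::real) ^ (2 * n + 2) = (x ^ Suc n)^2"
proof -
  have "(x ^ Suc n)^2 = x^(Suc n * 2)" by (rule power_mult[symmetric])
  also have "Suc n * 2 = 2 * n + 2" by simp
  finally show ?thesis by simp
qed

lemma SS_closed: "(real m - 1)^3 * real (SS m n) = real m ^ (2 * n + 2) - (2 * real n + 1) * (real m - 1) * real m ^ Suc n - real m"
proof (induction n)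
  case 0 then show ?case by (simp add: power2_eq_square algebra_simps)
next
  case (Suc n)
  have e: "real m ^ (2 * Suc n + 2) = real m ^ 2 * (real m ^ Suc n)^2"
    unfolding pw by (simp add: power_mult_distrib)
  have e2: "real m ^ (2 * n + 2) = (real m ^ Suc n)^2"
    by (rule pw)
  have "(real m - 1)^3 * real (SS m (Suc n)) = real m * ((real m - 1) * ((real m - 1) * real (NN m n))^2 + (real m - 1)^3 * real (SS m n))"
    by (simp add: algebra_simps power2_eq_square power3_eq_cube)
  also have "\<dots> = real m * ((real m - 1) * (real m ^ Suc n - 1)^2 + (real m ^ Suc n)^2 - (2 * real n + 1) * (real m - 1) * real m ^ Suc n - real m)"
    unfolding NN_closed Suc e2 by simp
  also have "\<dots> = real m ^ (2 * Suc n + 2) - (2 * real (Suc n) + 1) * (real m - 1) * real m ^ Suc (Suc n) - real m"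
    unfolding e by (simp add: algebra_simps power2_eq_square)
  finally show ?case .
qed

lemma final_identity:
  assumes "1 \<le> m"
  shows "yy m n 0 - (xx m n 0)^2 = real (m - 1) * real (SS m n)"
proof (cases "m = 1")
  case True
  have x1: "j \<le> n \<Longrightarrow> xx (Suc 0) n j = real n - real j" for j
    unfolding xx_def by simp
  have w1: "j \<le> n \<Longrightarrow> ww (Suc 0) n j = real j ^ 2 - 2 * real n * real j" for j
  proof (induction j)
    case 0 then show ?case by simp
  next
    case (Suc j)
    then have "j \<le> n" by simp
    then show ?case using Suc by (simp add: x1 power2_eq_square algebra_simps)
  qed
  show ?thesis using True by (simp add: yy_def w1 x1 power2_eq_square)
next
  case False
  then have q: "real m - 1 \<noteq> 0" using assms by simp
  let ?A = "real m ^ Suc n"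
  have "(real m - 1)^2 * (yy m n 0 - (xx m n 0)^2) = - ((real m - 1)^2 * ww m n n) - ((real m - 1) * xx m n 0)^2"
    by (simp add: yy_def algebra_simps power2_eq_square)
  also have "\<dots> = - ((?A - real m) * (real m - 1 - 2 * ?A) + 2 * real n * ?A * (real m - 1)) - (?A - real m)^2"
    using ww_closed[of n n m] xx_closed[of 0 n m] by simp
  also have "\<dots> = ?A^2 - (2 * real n + 1) * (real m - 1) * ?A - real m"
    by (simp add: algebra_simps power2_eq_square)
  also have "\<dots> = (real m - 1)^3 * real (SS m n)"
  proof -
    have e2: "real m ^ (2 * n + 2) = ?A^2"
      by (rule pw)
    show ?thesis using SS_closed[of m n] e2 by simp
  qed
  finally have "(real m - 1)^2 * (yy m n 0 - (xx m n 0)^2) = (real m - 1)^2 * ((real m - 1) * real (SS m n))"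
    by (simp add: power3_eq_cube power2_eq_square algebra_simps)
  then show ?thesis using q assms by (simp add: of_nat_diff)
qed

definition TT :: "nat \<Rightarrow> ennreal \<Rightarrow> ennreal \<Rightarrow> ennreal" where
  "TT m a b = (a + of_nat (m - 1) * b) / of_nat m"

lemma TT_mono: "a \<le> a' \<Longrightarrow> b \<le> b' \<Longrightarrow> TT m a b \<le> TT m a' b'"
  unfolding TT_def by (intro divide_right_mono_ennreal add_mono mult_left_mono) auto

lemma TT_ennreal: "1 \<le> m \<Longrightarrow> 0 \<le> a \<Longrightarrow> 0 \<le> b \<Longrightarrow>
  TT m (ennreal a) (ennreal b) = ennreal ((a + real (m - 1) * b) / real m)"
proof -
  assume a: "1 \<le> m" "0 \<le> a" "0 \<le> b"
  have "ennreal (real (m - 1)) * ennreal b = ennreal (real (m - 1) * b)"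
    by (rule ennreal_mult'[symmetric]) simp
  moreover have "ennreal a + ennreal (real (m - 1) * b) = ennreal (a + real (m - 1) * b)"
    using a by simp
  moreover have "ennreal (a + real (m - 1) * b) / ennreal (real m) = ennreal ((a + real (m - 1) * b) / real m)"
    using a by (intro divide_ennreal) auto
  ultimately show ?thesis unfolding TT_def ennreal_of_nat_eq_real_of_nat by simp
qed

lemma space_em: "emeasure (stream_space (MM m)) (space (stream_space (MM m))) = 1"
proof -
  interpret P: prob_space "stream_space (MM m)"
    by (rule prob_space.prob_space_stream_space[OF prob_space_measure_pmf])
  show ?thesis by (simp add: P.emeasure_space_1)
qed

lemma space_1: "(\<integral>\<^sup>+\<omega>. 1 \<partial>stream_space (MM m)) = 1"
proof -
  interpret P: prob_space "stream_space (MM m)"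
    by (rule prob_space.prob_space_stream_space[OF prob_space_measure_pmf])
  show ?thesis by (simp add: P.emeasure_space_1)
qed

lemma lin_step:
  assumes m1: "1 \<le> m" and meas[measurable]: "\<And>k. g k \<in> borel_measurable (stream_space (MM m))"
    and eq: "\<And>\<omega>. f \<omega> = 1 + g (stp j (shd \<omega>)) (stl \<omega>)"
  shows "(\<integral>\<^sup>+\<omega>. f \<omega> \<partial>stream_space (MM m)) =
     1 + TT m (\<integral>\<^sup>+\<omega>. g (Suc j) \<omega> \<partial>stream_space (MM m)) (\<integral>\<^sup>+\<omega>. g 0 \<omega> \<partial>stream_space (MM m))"
proof -
  have "(\<integral>\<^sup>+\<omega>. f \<omega> \<partial>stream_space (MM m)) = (\<integral>\<^sup>+\<omega>. 1 + g (stp j (shd \<omega>)) (stl \<omega>) \<partial>stream_space (MM m))"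
    by (simp add: eq)
  also have "\<dots> = (\<integral>\<^sup>+\<omega>. 1 \<partial>stream_space (MM m)) + (\<integral>\<^sup>+\<omega>. g (stp j (shd \<omega>)) (stl \<omega>) \<partial>stream_space (MM m))"
  proof (rule nn_integral_add)
    have "(\<lambda>\<omega>. g (stp j (shd \<omega>)) (stl \<omega>)) = (\<lambda>\<omega>. if shd \<omega> = 0 then g (Suc j) (stl \<omega>) else g 0 (stl \<omega>))"
      by (auto simp: stp_def fun_eq_iff)
    then show "(\<lambda>\<omega>. g (stp j (shd \<omega>)) (stl \<omega>)) \<in> borel_measurable (stream_space (MM m))" by simp
  qed simp
  also have "\<dots> = 1 + TT m (\<integral>\<^sup>+\<omega>. g (Suc j) \<omega> \<partial>stream_space (MM m)) (\<integral>\<^sup>+\<omega>. g 0 \<omega> \<partial>stream_space (MM m))"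
    unfolding space_1 TT_def by (subst integ_step[OF m1]) simp_all
  finally show ?thesis .
qed

lemma sq_step:
  assumes m1: "1 \<le> m" and meas[measurable]: "\<And>k. g k \<in> borel_measurable (stream_space (MM m))"
    and eq: "\<And>\<omega>. f \<omega> = 1 + g (stp j (shd \<omega>)) (stl \<omega>)"
  shows "(\<integral>\<^sup>+\<omega>. f \<omega> ^ 2 \<partial>stream_space (MM m)) =
     TT m (1 + 2 * (\<integral>\<^sup>+\<omega>. g (Suc j) \<omega> \<partial>stream_space (MM m)) + (\<integral>\<^sup>+\<omega>. g (Suc j) \<omega> ^ 2 \<partial>stream_space (MM m)))
          (1 + 2 * (\<integral>\<^sup>+\<omega>. g 0 \<omega> \<partial>stream_space (MM m)) + (\<integral>\<^sup>+\<omega>. g 0 \<omega> ^ 2 \<partial>stream_space (MM m)))"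
proof -
  define h where "h k \<omega> = (1 + g k \<omega>)^2" for k \<omega>
  have [measurable]: "h k \<in> borel_measurable (stream_space (MM m))" for k unfolding h_def by simp
  have hI: "(\<integral>\<^sup>+\<omega>. h k \<omega> \<partial>stream_space (MM m)) = 1 + 2 * (\<integral>\<^sup>+\<omega>. g k \<omega> \<partial>stream_space (MM m)) + (\<integral>\<^sup>+\<omega>. g k \<omega> ^ 2 \<partial>stream_space (MM m))" for k
  proof -
    have "h k = (\<lambda>\<omega>. (1 + 2 * g k \<omega>) + g k \<omega> ^ 2)" unfolding h_def by (auto simp: fun_eq_iff power2_sum algebra_simps)
    then have "(\<integral>\<^sup>+\<omega>. h k \<omega> \<partial>stream_space (MM m)) = (\<integral>\<^sup>+\<omega>. 1 + 2 * g k \<omega> \<partial>stream_space (MM m)) + (\<integral>\<^sup>+\<omega>. g k \<omega> ^ 2 \<partial>stream_space (MM m))"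
      by (simp add: nn_integral_add)
    also have "(\<integral>\<^sup>+\<omega>. 1 + 2 * g k \<omega> \<partial>stream_space (MM m)) = 1 + 2 * (\<integral>\<^sup>+\<omega>. g k \<omega> \<partial>stream_space (MM m))"
      by (simp add: nn_integral_add nn_integral_cmult space_1 space_em)
    finally show ?thesis .
  qed
  have "(\<integral>\<^sup>+\<omega>. f \<omega> ^ 2 \<partial>stream_space (MM m)) = (\<integral>\<^sup>+\<omega>. h (stp j (shd \<omega>)) (stl \<omega>) \<partial>stream_space (MM m))"
    by (simp add: eq h_def)
  also have "\<dots> = TT m (\<integral>\<^sup>+\<omega>. h (Suc j) \<omega> \<partial>stream_space (MM m)) (\<integral>\<^sup>+\<omega>. h 0 \<omega> \<partial>stream_space (MM m))"
    unfolding TT_def by (subst integ_step[OF m1]) simp_all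
  finally show ?thesis unfolding hI .
qed

lemma uniq:
  fixes d :: "nat \<Rightarrow> real"
  assumes rec: "\<And>j. j < n \<Longrightarrow> c * d j = d (Suc j) + (c - 1) * d 0" and dn: "d n = 0"
  shows "j \<le> n \<Longrightarrow> d j = 0"
proof -
  have all: "j \<le> n \<Longrightarrow> d j = d 0" for j
  proof (induction j)
    case 0 then show ?case by simp
  next
    case (Suc j)
    then have "d j = d 0" by simp
    moreover have "c * d j = d (Suc j) + (c - 1) * d 0" using Suc by (intro rec) simp
    ultimately show ?case by (simp add: algebra_simps)
  qed
  assume "j \<le> n"
  then show "d j = 0" using all[of j] all[of n] dn by simp
qed

lemma ennreal_lin: "0 \<le> a \<Longrightarrow> 0 \<le> b \<Longrightarrow> 1 + 2 * ennreal a + ennreal b = ennreal (1 + 2*a + b)"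
proof -
  assume "0 \<le> a" "0 \<le> b"
  have "2 * ennreal a = ennreal (2 * a)" by (simp add: ennreal_mult')
  then show ?thesis using \<open>0 \<le> a\<close> \<open>0 \<le> b\<close> by simp
qed

lemma SUP_sq:
  fixes f :: "nat \<Rightarrow> ennreal"
  assumes inc: "incseq f"
  shows "(SUP N. f N ^ 2) = (SUP N. f N) ^ 2"
proof (rule antisym)
  show "(SUP N. f N ^ 2) \<le> (SUP N. f N) ^ 2"
    by (rule SUP_least) (intro power_mono SUP_upper, auto)
  have "(SUP N. f N) ^ 2 = (SUP i. SUP k. f i * f k)"
    by (simp add: power2_eq_square SUP_mult_left_ennreal SUP_mult_right_ennreal) (rule SUP_commute)
  also have "\<dots> \<le> (SUP N. f N ^ 2)"
  proof (intro SUP_least)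
    fix i k
    have "f i * f k \<le> f (max i k) * f (max i k)"
      using inc by (intro mult_mono) (auto simp: incseq_def)
    also have "\<dots> \<le> (SUP N. f N ^ 2)"
      by (rule SUP_upper2[of "max i k"]) (auto simp: power2_eq_square)
    finally show "f i * f k \<le> (SUP N. f N ^ 2)" .
  qed
  finally show "(SUP N. f N) ^ 2 \<le> (SUP N. f N ^ 2)" .
qed

locale mset =
  fixes m n :: nat
  assumes m1: "1 \<le> m"

context mset
begin

lemma xx_step: "j < n \<Longrightarrow> xx m n j = 1 + (xx m n (Suc j) + real (m - 1) * xx m n 0) / real m"
proof -
  assume "j < n"
  have "real m * xx m n j = real m + xx m n (Suc j) + (real m - 1) * xx m n 0"
    using xx_rec[OF \<open>j < n\<close>] .
  then show ?thesis using m1 by (simp add: field_simps of_nat_diff)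
qed

lemma bound1: "(\<integral>\<^sup>+\<omega>. of_nat (F n N j \<omega>) \<partial>stream_space (MM m)) \<le> ennreal (xx m n j)"
proof (induction N arbitrary: j)
  case 0 then show ?case by simp
next
  case (Suc N)
  show ?case
  proof (cases "n \<le> j")
    case True then show ?thesis by simp
  next
    case False
    have "(\<integral>\<^sup>+\<omega>. of_nat (F n (Suc N) j \<omega>) \<partial>stream_space (MM m))
      = 1 + TT m (\<integral>\<^sup>+\<omega>. of_nat (F n N (Suc j) \<omega>) \<partial>stream_space (MM m)) (\<integral>\<^sup>+\<omega>. of_nat (F n N 0 \<omega>) \<partial>stream_space (MM m))"
      by (rule lin_step[OF m1]) (use False in simp_all)
    also have "\<dots> \<le> 1 + TT m (ennreal (xx m n (Suc j))) (ennreal (xx m n 0))"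
      by (intro add_left_mono TT_mono Suc.IH)
    also have "\<dots> = 1 + ennreal ((xx m n (Suc j) + real (m - 1) * xx m n 0) / real m)"
      using m1 by (simp add: TT_ennreal xx_nonneg)
    also have "\<dots> = ennreal (xx m n j)"
      using False m1 by (subst (2) xx_step) (auto simp: xx_nonneg)
    finally show ?thesis .
  qed
qed

lemma zz_ineq:
  assumes "j < n"
  shows "(1 + 2 * xx m n (Suc j) + 2 * xx m n 0 * xx m n (Suc j) + real (m - 1) * (1 + 2 * xx m n 0 + 2 * xx m n 0 * xx m n 0)) / real m
     \<le> 2 * xx m n 0 * xx m n j"
proof -
  define x' where "x' = xx m n (Suc j)"
  define x0 where "x0 = xx m n 0"
  define xj where "xj = xx m n j"
  define K where "K = x' + real (m - 1) * x0"
  have K: "K = real m * xj - real m" using xx_rec[OF assms] m1 by (simp add: K_def x'_def x0_def xj_def of_nat_diff)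
  have "1 + 2 * x' + 2 * x0 * x' + real (m - 1) * (1 + 2 * x0 + 2 * x0 * x0) = real m + 2 * K + 2 * x0 * K"
    using m1 by (simp add: K_def algebra_simps of_nat_diff)
  also have "\<dots> = real m * (2 * x0 * xj + (2 * xj - 1 - 2 * x0))" unfolding K by (simp add: algebra_simps)
  also have "\<dots> \<le> real m * (2 * x0 * xj)"
    using xx_le0[of m n j] by (intro mult_left_mono) (auto simp: x0_def xj_def)
  finally show ?thesis using m1 by (simp add: x'_def x0_def xj_def divide_le_eq mult.commute)
qed

lemma bound2: "(\<integral>\<^sup>+\<omega>. (of_nat (F n N j \<omega>))^2 \<partial>stream_space (MM m)) \<le> ennreal (2 * xx m n 0 * xx m n j)"
proof (induction N arbitrary: j)
  case 0 then show ?case by simp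
next
  case (Suc N)
  show ?case
  proof (cases "n \<le> j")
    case True then show ?thesis by simp
  next
    case False
    let ?A = "\<lambda>k. \<integral>\<^sup>+\<omega>. of_nat (F n N k \<omega>) \<partial>stream_space (MM m)"
    let ?B = "\<lambda>k. \<integral>\<^sup>+\<omega>. (of_nat (F n N k \<omega>))^2 \<partial>stream_space (MM m)"
    let ?z = "\<lambda>k. 2 * xx m n 0 * xx m n k"
    have "(\<integral>\<^sup>+\<omega>. (of_nat (F n (Suc N) j \<omega>))^2 \<partial>stream_space (MM m))
      = TT m (1 + 2 * ?A (Suc j) + ?B (Suc j)) (1 + 2 * ?A 0 + ?B 0)"
      by (rule sq_step[OF m1]) (use False in simp_all)
    also have "\<dots> \<le> TT m (1 + 2 * ennreal (xx m n (Suc j)) + ennreal (?z (Suc j))) (1 + 2 * ennreal (xx m n 0) + ennreal (?z 0))"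
      by (intro TT_mono add_mono mult_left_mono Suc.IH bound1 order_refl) auto
    also have "\<dots> = ennreal ((1 + 2 * xx m n (Suc j) + ?z (Suc j) + real (m - 1) * (1 + 2 * xx m n 0 + ?z 0)) / real m)"
      using m1 by (simp add: ennreal_lin xx_nonneg TT_ennreal del: ennreal_plus)
    also have "\<dots> \<le> ennreal (?z j)"
      using zz_ineq[of j] False by (intro ennreal_leI) (simp add: mult.assoc)
    finally show ?thesis .
  qed
qed


lemma incseq_Ffun: "incseq (\<lambda>N \<omega>. (of_nat (F n N j \<omega>) :: ennreal))"
proof -
  have "\<And>N \<omega>. (of_nat (F n N j \<omega>)::ennreal) \<le> of_nat (F n (Suc N) j \<omega>)" by (metis F_mono of_nat_le_iff)
  then show ?thesis by (intro incseq_SucI le_funI)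
qed

lemma incseq_Ffun2: "incseq (\<lambda>N \<omega>. (of_nat (F n N j \<omega>) :: ennreal)^2)"
proof -
  have "\<And>N \<omega>. (of_nat (F n N j \<omega>)::ennreal) \<le> of_nat (F n (Suc N) j \<omega>)" by (metis F_mono of_nat_le_iff)
  then show ?thesis by (intro incseq_SucI le_funI power_mono) auto
qed

lemma E_le: "(\<integral>\<^sup>+\<omega>. G n j \<omega> \<partial>stream_space (MM m)) \<le> ennreal (xx m n j)"
proof -
  have "(\<integral>\<^sup>+\<omega>. G n j \<omega> \<partial>stream_space (MM m)) = (SUP N. \<integral>\<^sup>+\<omega>. of_nat (F n N j \<omega>) \<partial>stream_space (MM m))"
    unfolding G_def by (rule nn_integral_monotone_convergence_SUP[OF incseq_Ffun]) simp
  also have "\<dots> \<le> ennreal (xx m n j)"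
    by (rule SUP_least) (rule bound1)
  finally show ?thesis .
qed

lemma Q_le: "(\<integral>\<^sup>+\<omega>. (G n j \<omega>)^2 \<partial>stream_space (MM m)) \<le> ennreal (2 * xx m n 0 * xx m n j)"
proof -
  have G2: "(G n j \<omega>)^2 = (SUP N. (of_nat (F n N j \<omega>))^2)" for \<omega>
    unfolding G_def by (rule SUP_sq[OF incseq_F, symmetric])
  have "(\<integral>\<^sup>+\<omega>. (G n j \<omega>)^2 \<partial>stream_space (MM m)) = (SUP N. \<integral>\<^sup>+\<omega>. (of_nat (F n N j \<omega>))^2 \<partial>stream_space (MM m))"
    unfolding G2 by (rule nn_integral_monotone_convergence_SUP[OF incseq_Ffun2]) simp
  also have "\<dots> \<le> ennreal (2 * xx m n 0 * xx m n j)"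
    by (rule SUP_least) (rule bound2)
  finally show ?thesis .
qed

definition "ee j = enn2real (\<integral>\<^sup>+\<omega>. G n j \<omega> \<partial>stream_space (MM m))"
definition "qq j = enn2real (\<integral>\<^sup>+\<omega>. (G n j \<omega>)^2 \<partial>stream_space (MM m))"

lemma E_ee: "(\<integral>\<^sup>+\<omega>. G n j \<omega> \<partial>stream_space (MM m)) = ennreal (ee j)"
  unfolding ee_def by (intro ennreal_enn2real[symmetric] le_less_trans[OF E_le]) simp

lemma Q_qq: "(\<integral>\<^sup>+\<omega>. (G n j \<omega>)^2 \<partial>stream_space (MM m)) = ennreal (qq j)"
  unfolding qq_def by (intro ennreal_enn2real[symmetric] le_less_trans[OF Q_le]) simp

lemma ee_nn: "0 \<le> ee j"
  by (simp add: ee_def)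

lemma qq_nn: "0 \<le> qq j"
  by (simp add: qq_def)

lemma ee_ge: "n \<le> j \<Longrightarrow> ee j = 0"
  by (simp add: ee_def G_ge)

lemma qq_ge: "n \<le> j \<Longrightarrow> qq j = 0"
  by (simp add: qq_def G_ge)

lemma ee_rec: "j < n \<Longrightarrow> real m * ee j = real m + ee (Suc j) + (real m - 1) * ee 0"
proof -
  assume j: "j < n"
  have "ennreal (ee j) = 1 + TT m (ennreal (ee (Suc j))) (ennreal (ee 0))"
    unfolding E_ee[symmetric] by (rule lin_step[OF m1]) (simp_all add: G_rec[OF j])
  also have "\<dots> = ennreal (1 + (ee (Suc j) + real (m - 1) * ee 0) / real m)"
    using m1 by (simp add: TT_ennreal ee_nn)
  finally have h: "ennreal (ee j) = ennreal (1 + (ee (Suc j) + real (m - 1) * ee 0) / real m)" .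
  have "0 \<le> 1 + (ee (Suc j) + real (m - 1) * ee 0) / real m"
    by (intro add_nonneg_nonneg divide_nonneg_nonneg mult_nonneg_nonneg ee_nn) simp_all
  then have "ee j = 1 + (ee (Suc j) + real (m - 1) * ee 0) / real m"
    using h ennreal_inj[OF ee_nn] by blast
  then have "real m * ee j = real m * 1 + real m * ((ee (Suc j) + real (m - 1) * ee 0) / real m)"
    by (simp only: distrib_left)
  also have "\<dots> = real m + (ee (Suc j) + real (m - 1) * ee 0)"
    using m1 by simp
  finally show ?thesis using m1 by (simp add: of_nat_diff)
qed

lemma ee_xx: "j \<le> n \<Longrightarrow> ee j = xx m n j"
proof -
  assume "j \<le> n"
  have "(\<lambda>j. ee j - xx m n j) j = 0"
  proof (rule uniq[of n "real m"])
    fix j assume "j < n"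
    show "real m * (ee j - xx m n j) = (ee (Suc j) - xx m n (Suc j)) + (real m - 1) * (ee 0 - xx m n 0)"
      using ee_rec[OF \<open>j < n\<close>] xx_rec[where m=m, OF \<open>j < n\<close>] by (simp add: algebra_simps)
  next
    show "ee n - xx m n n = 0" by (simp add: ee_ge xx_ge)
  qed fact
  then show ?thesis by simp
qed

end

context mset
begin

lemma qq_rec: "j < n \<Longrightarrow> real m * qq j = 2 * real m * xx m n j - real m + qq (Suc j) + (real m - 1) * qq 0"
proof -
  assume j: "j < n"
  let ?r = "(1 + 2 * ee (Suc j) + qq (Suc j) + real (m - 1) * (1 + 2 * ee 0 + qq 0)) / real m"
  have "ennreal (qq j) = TT m (1 + 2 * ennreal (ee (Suc j)) + ennreal (qq (Suc j))) (1 + 2 * ennreal (ee 0) + ennreal (qq 0))"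
    unfolding E_ee[symmetric] Q_qq[symmetric] by (rule sq_step[OF m1]) (simp_all add: G_rec[OF j])
  also have "\<dots> = TT m (ennreal (1 + 2 * ee (Suc j) + qq (Suc j))) (ennreal (1 + 2 * ee 0 + qq 0))"
    by (simp only: ennreal_lin ee_nn qq_nn)
  also have "\<dots> = ennreal ?r"
    using m1 by (intro TT_ennreal) (auto intro!: add_nonneg_nonneg mult_nonneg_nonneg ee_nn qq_nn)
  finally have h: "ennreal (qq j) = ennreal ?r" .
  have "0 \<le> ?r"
    by (intro add_nonneg_nonneg divide_nonneg_nonneg mult_nonneg_nonneg ee_nn qq_nn) simp_all
  then have "qq j = ?r" using h ennreal_inj[OF qq_nn] by blast
  then have "real m * qq j = real m * ?r" by simp
  also have "\<dots> = 1 + 2 * ee (Suc j) + qq (Suc j) + real (m - 1) * (1 + 2 * ee 0 + qq 0)"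
    using m1 by simp
  also have "\<dots> = real m + 2 * (xx m n (Suc j) + (real m - 1) * xx m n 0) + qq (Suc j) + (real m - 1) * qq 0"
    using j m1 by (simp add: ee_xx algebra_simps of_nat_diff)
  also have "\<dots> = 2 * real m * xx m n j - real m + qq (Suc j) + (real m - 1) * qq 0"
    using xx_rec[where m=m, OF j] by (simp add: algebra_simps)
  finally show ?thesis .
qed

lemma qq_yy: "j \<le> n \<Longrightarrow> qq j = yy m n j"
proof -
  assume "j \<le> n"
  have "(\<lambda>j. qq j - yy m n j) j = 0"
  proof (rule uniq[of n "real m"])
    fix j assume "j < n"
    show "real m * (qq j - yy m n j) = (qq (Suc j) - yy m n (Suc j)) + (real m - 1) * (qq 0 - yy m n 0)"
      using qq_rec[OF \<open>j < n\<close>] yy_rec[of m n j] by (simp add: algebra_simps)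
  next
    show "qq n - yy m n n = 0" by (simp add: qq_ge yy_n)
  qed fact
  then show ?thesis by simp
qed

end


lemma card_NN: "card (tree_nodes m n) = NN m n"
  by (induction n) (simp_all add: tree_nodes_0 card_tree_nodes_Suc)

lemma S_SS: "S m n = SS m n"
  by (induction n) (simp_all add: S_0 S_Suc card_NN)

lemma xi_meas[measurable]: "xi m n \<in> measurable (stream_space (MM m')) (count_space UNIV)"
  unfolding xi_def[abs_def] by measurable

theorem mainTheorem1:
  fixes m n :: nat
  assumes "m \<ge> 1" and "n \<ge> 1"
  shows "prob_space.variance (sym_space m) (\<lambda>\<omega>. real (xi m n \<omega>)) = real (m - 1) * real (S m n)"
proof -
  interpret mset m n using assms by unfold_locales
  interpret P: prob_space "stream_space (MM m)"
    by (rule prob_space.prob_space_stream_space[OF prob_space_measure_pmf])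
  have fin: "(\<integral>\<^sup>+\<omega>. G n 0 \<omega> \<partial>stream_space (MM m)) \<noteq> \<infinity>"
    unfolding E_ee by simp
  have ae: "AE \<omega> in stream_space (MM m). G n 0 \<omega> \<noteq> \<infinity>"
    by (rule nn_integral_PInf_AE[OF _ fin]) simp
  have ae1: "AE \<omega> in stream_space (MM m). ennreal (real (xi m n \<omega>)) = G n 0 \<omega>"
    using ae by eventually_elim (simp add: G_xi[of n _ m] ennreal_of_nat_eq_real_of_nat)
  have ae2: "AE \<omega> in stream_space (MM m). ennreal ((real (xi m n \<omega>))^2) = (G n 0 \<omega>)^2"
    using ae1 by eventually_elim (simp add: ennreal_power[symmetric])
  have i1: "(\<integral>\<^sup>+\<omega>. ennreal (real (xi m n \<omega>)) \<partial>stream_space (MM m)) = ennreal (xx m n 0)"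
    by (subst nn_integral_cong_AE[OF ae1]) (simp add: E_ee ee_xx)
  have i2: "(\<integral>\<^sup>+\<omega>. ennreal ((real (xi m n \<omega>))^2) \<partial>stream_space (MM m)) = ennreal (yy m n 0)"
    by (subst nn_integral_cong_AE[OF ae2]) (simp add: Q_qq qq_yy)
  have "integrable (stream_space (MM m)) (\<lambda>\<omega>. real (xi m n \<omega>)) \<and> integral\<^sup>L (stream_space (MM m)) (\<lambda>\<omega>. real (xi m n \<omega>)) = xx m n 0"
    using i1 by (subst nn_integral_eq_integrable[symmetric]) (simp_all add: xx_nonneg)
  moreover have "integrable (stream_space (MM m)) (\<lambda>\<omega>. (real (xi m n \<omega>))^2) \<and> integral\<^sup>L (stream_space (MM m)) (\<lambda>\<omega>. (real (xi m n \<omega>))^2) = yy m n 0"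
    using i2 by (subst nn_integral_eq_integrable[symmetric]) (simp_all add: qq_yy[symmetric] qq_nn)
  ultimately have I1: "integrable (stream_space (MM m)) (\<lambda>\<omega>. real (xi m n \<omega>))"
    and E1: "integral\<^sup>L (stream_space (MM m)) (\<lambda>\<omega>. real (xi m n \<omega>)) = xx m n 0"
    and I2: "integrable (stream_space (MM m)) (\<lambda>\<omega>. (real (xi m n \<omega>))^2)"
    and E2: "integral\<^sup>L (stream_space (MM m)) (\<lambda>\<omega>. (real (xi m n \<omega>))^2) = yy m n 0"
    by auto
  have "P.variance (\<lambda>\<omega>. real (xi m n \<omega>)) = integral\<^sup>L (stream_space (MM m)) (\<lambda>\<omega>. (real (xi m n \<omega>))^2) - (integral\<^sup>L (stream_space (MM m)) (\<lambda>\<omega>. real (xi m n \<omega>)))^2"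
    by (rule P.variance_eq[OF I1 I2])
  also have "\<dots> = yy m n 0 - (xx m n 0)^2"
    by (simp only: E1 E2)
  also have "\<dots> = real (m - 1) * real (S m n)"
    using final_identity[OF assms(1)] by (simp add: S_SS)
  finally show ?thesis by (simp add: sym_space_eq)
qed

end
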